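(* In the single-deceiver single-oblivious quadratic setting of the context, let $\Omega$ be the set of attainable values $J^{\mathrm{ref}}\in\mathbb{R}$, and assume $r_{1,2}\neq0$. Then: (a) if $\varepsilon_1r_{1,2}q_1q_3>0$, then $\Omega=\mathcal{J}_1\Big(\big(-\infty,-\tfrac{r_{1,1}}{2r_{1,2}}\big)\cap f(\Delta_1)\Big)$; (b) if $\varepsilon_1r_{1,2}q_1q_3<0$, then $\Omega=\mathcal{J}_1\Big(\big(-\tfrac{r_{1,1}}{2r_{1,2}},\infty\big)\cap f(\Delta_1)\Big)$.
   Context: Quadratic game: $J_i(x)=\frac12x^\top Q_ix+b_i^\top x+p_i$, $Q_i\in\mathbb{R}^{N\times N}$ symmetric, $b_i\in\mathbb{R}^N$, $p_i\in\mathbb{R}$. $(Q)_{j:}$ = $j$-th row, $(Q)_{:j}$ = $j$-th column, $(b)_j$ = $j$-th entry; $[Q]^{d,1}$ is $Q$ with row $d$ and column $1$ removed, $[Q]^{d,\sim}$ is $Q$ with only row $d$ removed. $\mathcal{Q}$ is the matrix with $m$-th row $(Q_m)_{m:}$, $\mathcal{B}$ the vector with $m$-th entry $(b_m)_m$. Player 1 is the only deceiver and deceives only player $d\neq1$. $\bar{\mathcal{Q}}$ is the $N\times N$ matrix whose only nonzero row is row $d$, equal to $(Q_d)_{1:}$; $\bar{\mathcal{B}}$ the vector whose only nonzero entry is entry $d$, equal to $(b_d)_1$. For $\delta\in\mathbb{R}$, $\mathcal{Q}_\delta=\mathcal{Q}+\delta\bar{\mathcal{Q}}$, $\mathcal{B}_\delta=\mathcal{B}+\delta\bar{\mathcal{B}}$.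 Fix $k>0$; assume $-k\mathcal{Q}$ is Hurwitz and $[\mathcal{Q}]^{d,1}$ is invertible. $x^*=-\mathcal{Q}^{-1}\mathcal{B}$; $\Delta_1=\{\delta\in\mathbb{R}:-k\mathcal{Q}_\delta\text{ Hurwitz}\}$; for $\delta\in\Delta_1$, $x_\delta=-\mathcal{Q}_\delta^{-1}\mathcal{B}_\delta$ (the deceptive Nash equilibrium). $\Phi=\begin{bmatrix}1\\-([\mathcal{Q}]^{d,1})^{-1}([\mathcal{Q}]^{d,\sim})_{:1}\end{bmatrix}\in\mathbb{R}^N$; $q_1=-\big((b_d)_1+(Q_d)_{1:}x^*\big)$, $q_2=(Q_d)_{1:}\Phi$, $q_3=(Q_d)_{d:}\Phi$; $r_{i,2}=\frac12\Phi^\top Q_i\Phi$, $r_{i,1}=(Q_ix^*+b_i)^\top\Phi$; $f(\delta)=\frac{q_1\delta}{q_2\delta+q_3}$ for $\delta\in\Delta_1$; $\mathcal{J}_i(e)=r_{i,2}e^2+r_{i,1}e+J_i(x^* )$. Given a nonzero constant $\varepsilon_1$, a value $J^{\mathrm{ref}}\in\mathbb{R}$ is attainable if there exists $\delta^*\in\Delta_1$ with $J_1(x_{\delta^*})=J^{\mathrm{ref}}$ and $\varepsilon_1\frac{d}{d\delta}J_1(x_\delta)\big|_{\delta=\delta^*}<0$. *)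

theory Defs
  imports Complex_Main "Jordan_Normal_Form.Determinant" "Jordan_Normal_Form.Char_Poly"
begin

text \<open>Conventions: players and coordinates are indexed 0..N-1 (paper's index m is our m-1).
  Player 1 of the paper is index 0; the deceived player d is an index with 0 < d < N.\<close>

definition hurwitz :: "real mat \<Rightarrow> bool" where
  "hurwitz M \<longleftrightarrow> M \<in> carrier_mat (dim_row M) (dim_row M) \<and>
     (\<forall>l. eigenvalue (map_mat complex_of_real M) l \<longrightarrow> Re l < 0)"

definition minv :: "real mat \<Rightarrow> real mat" where
  "minv A = (SOME B. B \<in> carrier_mat (dim_row A) (dim_row A) \<and>
                     A * B = 1\<^sub>m (dim_row A) \<and> B * A = 1\<^sub>m (dim_row A))"

definition del_row :: "'a mat \<Rightarrow> nat \<Rightarrow> 'a mat" where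
  "del_row A i = mat (dim_row A - 1) (dim_col A) (\<lambda>(r,c). A $$ (insert_index i r, c))"

definition Jc :: "real mat \<Rightarrow> real vec \<Rightarrow> real \<Rightarrow> real vec \<Rightarrow> real" where
  "Jc Qi bi c x = 1/2 * (x \<bullet> (Qi *\<^sub>v x)) + bi \<bullet> x + c"

definition calQ :: "nat \<Rightarrow> (nat \<Rightarrow> real mat) \<Rightarrow> real mat" where
  "calQ N Q = mat N N (\<lambda>(m,j). Q m $$ (m,j))"

definition calB :: "nat \<Rightarrow> (nat \<Rightarrow> real vec) \<Rightarrow> real vec" where
  "calB N b = vec N (\<lambda>m. b m $ m)"

definition barQ :: "nat \<Rightarrow> (nat \<Rightarrow> real mat) \<Rightarrow> nat \<Rightarrow> real mat" where
  "barQ N Q d = mat N N (\<lambda>(m,j). if m = d then Q d $$ (0,j) else 0)"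

definition barB :: "nat \<Rightarrow> (nat \<Rightarrow> real vec) \<Rightarrow> nat \<Rightarrow> real vec" where
  "barB N b d = vec N (\<lambda>m. if m = d then b d $ 0 else 0)"

definition Qdelta :: "nat \<Rightarrow> (nat \<Rightarrow> real mat) \<Rightarrow> nat \<Rightarrow> real \<Rightarrow> real mat" where
  "Qdelta N Q d \<delta> = calQ N Q + \<delta> \<cdot>\<^sub>m barQ N Q d"

definition Bdelta :: "nat \<Rightarrow> (nat \<Rightarrow> real vec) \<Rightarrow> nat \<Rightarrow> real \<Rightarrow> real vec" where
  "Bdelta N b d \<delta> = calB N b + \<delta> \<cdot>\<^sub>v barB N b d"

definition xstar :: "nat \<Rightarrow> (nat \<Rightarrow> real mat) \<Rightarrow> (nat \<Rightarrow> real vec) \<Rightarrow> real vec" where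
  "xstar N Q b = - (minv (calQ N Q) *\<^sub>v calB N b)"

definition Delta1 :: "nat \<Rightarrow> (nat \<Rightarrow> real mat) \<Rightarrow> nat \<Rightarrow> real \<Rightarrow> real set" where
  "Delta1 N Q d k = {\<delta>. hurwitz (- (k \<cdot>\<^sub>m Qdelta N Q d \<delta>))}"

definition xdelta :: "nat \<Rightarrow> (nat \<Rightarrow> real mat) \<Rightarrow> (nat \<Rightarrow> real vec) \<Rightarrow> nat \<Rightarrow> real \<Rightarrow> real vec" where
  "xdelta N Q b d \<delta> = - (minv (Qdelta N Q d \<delta>) *\<^sub>v Bdelta N b d \<delta>)"

definition Phi :: "nat \<Rightarrow> (nat \<Rightarrow> real mat) \<Rightarrow> nat \<Rightarrow> real vec" where
  "Phi N Q d = (let w = - (minv (mat_delete (calQ N Q) d 0) *\<^sub>v col (del_row (calQ N Q) d) 0)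
                in vec N (\<lambda>i. if i = 0 then 1 else w $ (i - 1)))"

definition q1 :: "nat \<Rightarrow> (nat \<Rightarrow> real mat) \<Rightarrow> (nat \<Rightarrow> real vec) \<Rightarrow> nat \<Rightarrow> real" where
  "q1 N Q b d = - (b d $ 0 + row (Q d) 0 \<bullet> xstar N Q b)"

definition q2 :: "nat \<Rightarrow> (nat \<Rightarrow> real mat) \<Rightarrow> nat \<Rightarrow> real" where
  "q2 N Q d = row (Q d) 0 \<bullet> Phi N Q d"

definition q3 :: "nat \<Rightarrow> (nat \<Rightarrow> real mat) \<Rightarrow> nat \<Rightarrow> real" where
  "q3 N Q d = row (Q d) d \<bullet> Phi N Q d"

definition r2 :: "nat \<Rightarrow> (nat \<Rightarrow> real mat) \<Rightarrow> nat \<Rightarrow> nat \<Rightarrow> real" where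
  "r2 N Q d i = 1/2 * (Phi N Q d \<bullet> (Q i *\<^sub>v Phi N Q d))"

definition r1 :: "nat \<Rightarrow> (nat \<Rightarrow> real mat) \<Rightarrow> (nat \<Rightarrow> real vec) \<Rightarrow> nat \<Rightarrow> nat \<Rightarrow> real" where
  "r1 N Q b d i = (Q i *\<^sub>v xstar N Q b + b i) \<bullet> Phi N Q d"

definition fdec :: "nat \<Rightarrow> (nat \<Rightarrow> real mat) \<Rightarrow> (nat \<Rightarrow> real vec) \<Rightarrow> nat \<Rightarrow> real \<Rightarrow> real" where
  "fdec N Q b d \<delta> = q1 N Q b d * \<delta> / (q2 N Q d * \<delta> + q3 N Q d)"

definition calJ :: "nat \<Rightarrow> (nat \<Rightarrow> real mat) \<Rightarrow> (nat \<Rightarrow> real vec) \<Rightarrow> (nat \<Rightarrow> real) \<Rightarrow> nat \<Rightarrow> nat \<Rightarrow> real \<Rightarrow> real" where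
  "calJ N Q b p d i e = r2 N Q d i * e^2 + r1 N Q b d i * e + Jc (Q i) (b i) (p i) (xstar N Q b)"

definition attainable :: "nat \<Rightarrow> (nat \<Rightarrow> real mat) \<Rightarrow> (nat \<Rightarrow> real vec) \<Rightarrow> (nat \<Rightarrow> real) \<Rightarrow> nat \<Rightarrow> real \<Rightarrow> real \<Rightarrow> real \<Rightarrow> bool" where
  "attainable N Q b p d k eps1 Jref \<longleftrightarrow>
     (\<exists>\<delta>s \<in> Delta1 N Q d k. Jc (Q 0) (b 0) (p 0) (xdelta N Q b d \<delta>s) = Jref \<and>
        (\<exists>D. ((\<lambda>\<delta>. Jc (Q 0) (b 0) (p 0) (xdelta N Q b d \<delta>)) has_real_derivative D) (at \<delta>s)
             \<and> eps1 * D < 0))"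

end

theory Submission
  imports Defs
begin
lemma det_inv_exists:
  assumes A: "(A::real mat) \<in> carrier_mat n n" and dA: "det A \<noteq> 0"
  shows "\<exists>B\<in>carrier_mat n n. A * B = 1\<^sub>m n \<and> B * A = 1\<^sub>m n"
  using det_non_zero_imp_unit[OF A dA, of "()"]
  unfolding Units_def ring_mat_def by auto

lemma inj_det:
  assumes A: "(A::real mat) \<in> carrier_mat n n"
   and inj: "\<And>v. v \<in> carrier_vec n \<Longrightarrow> A *\<^sub>v v = 0\<^sub>v n \<Longrightarrow> v = 0\<^sub>v n"
  shows "det A \<noteq> 0"
  using det_0_iff_vec_prod_zero[OF A] inj by auto

lemma minv_spec:
  assumes A: "(A::real mat) \<in> carrier_mat n n"
   and inj: "\<And>v. v \<in> carrier_vec n \<Longrightarrow> A *\<^sub>v v = 0\<^sub>v n \<Longrightarrow> v = 0\<^sub>v n"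
  shows "minv A \<in> carrier_mat n n \<and> A * minv A = 1\<^sub>m n \<and> minv A * A = 1\<^sub>m n"
proof -
  from det_inv_exists[OF A inj_det[OF A inj]] have "\<exists>B. B \<in> carrier_mat (dim_row A) (dim_row A) \<and>
                     A * B = 1\<^sub>m (dim_row A) \<and> B * A = 1\<^sub>m (dim_row A)" using A by auto
  from someI_ex[OF this] show ?thesis using A unfolding minv_def by auto
qed

lemma minv_spec2:
  assumes A: "(A::real mat) \<in> carrier_mat n n" and "invertible_mat A"
  shows "minv A \<in> carrier_mat n n \<and> A * minv A = 1\<^sub>m n \<and> minv A * A = 1\<^sub>m n"
proof -
  from assms obtain B where "A * B = 1\<^sub>m n" "B * A = 1\<^sub>m (dim_row B)"
    unfolding invertible_mat_def inverts_mat_def by auto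
  hence "\<exists>B. B \<in> carrier_mat (dim_row A) (dim_row A) \<and>
                     A * B = 1\<^sub>m (dim_row A) \<and> B * A = 1\<^sub>m (dim_row A)" using A
    by (metis carrier_matD(1) carrier_matD(2) carrier_matI index_mult_mat(2,3) index_one_mat(2,3))
  from someI_ex[OF this] show ?thesis using A unfolding minv_def by auto
qed

lemma hurwitz_inj:
  assumes h: "hurwitz (- (k \<cdot>\<^sub>m M))" and M: "M \<in> carrier_mat n n"
    and v: "v \<in> carrier_vec n" and Mv: "M *\<^sub>v v = 0\<^sub>v n"
  shows "v = 0\<^sub>v n"
proof (rule ccontr)
  assume nz: "v \<noteq> 0\<^sub>v n"
  let ?C = "map_mat complex_of_real (- (k \<cdot>\<^sub>m M))"
  let ?w = "map_vec complex_of_real v"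
  have Mk: "- (k \<cdot>\<^sub>m M) \<in> carrier_mat n n" using M by auto
  have "(- (k \<cdot>\<^sub>m M)) *\<^sub>v v = 0\<^sub>v n"
  proof -
    have "(k \<cdot>\<^sub>m M) *\<^sub>v v = k \<cdot>\<^sub>v (M *\<^sub>v v)"
      using M v by (intro eq_vecI) (auto simp: scalar_prod_def sum_distrib_left ac_simps)
    then show ?thesis using M v Mv by (auto intro!: eq_vecI)
  qed
  hence "?C *\<^sub>v ?w = map_vec complex_of_real (0\<^sub>v n)"
    using of_real_hom.mult_mat_vec_hom[OF Mk v] by metis
  also have "map_vec complex_of_real (0\<^sub>v n) = 0\<^sub>v n" by (auto intro!: eq_vecI)
  finally have "?C *\<^sub>v ?w = 0\<^sub>v n" .
  moreover have "?w \<noteq> 0\<^sub>v n"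
  proof
    assume w0: "?w = 0\<^sub>v n"
    have "v = 0\<^sub>v n"
    proof (rule eq_vecI)
      fix i assume "i < dim_vec (0\<^sub>v n :: real vec)"
      hence i: "i < n" by simp
      have "?w $ i = 0" using w0 i by simp
      thus "v $ i = 0\<^sub>v n $ i" using i v by simp
    qed (use v in auto)
    with nz show False by simp
  qed
  moreover have "(0::complex) \<cdot>\<^sub>v ?w = 0\<^sub>v n" using v by (auto intro!: eq_vecI)
  moreover have "?w \<in> carrier_vec (dim_row ?C)" using v M by auto
  moreover have "dim_row ?C = n" using M by auto
  ultimately have "eigenvalue ?C 0"
    unfolding eigenvalue_def eigenvector_def by metis
  with h show False unfolding hurwitz_def by force
qed

lemma mv_uminus: "(A::real mat) \<in> carrier_mat n m \<Longrightarrow> v \<in> carrier_vec m \<Longrightarrow> A *\<^sub>v (-v) = -(A *\<^sub>v v)"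
  by (intro eq_vecI) (auto simp: scalar_prod_uminus_right)

context
  fixes N d :: nat and Q :: "nat \<Rightarrow> real mat" and b :: "nat \<Rightarrow> real vec"
  assumes dimsA: "\<forall>i<N. Q i \<in> carrier_mat N N \<and> b i \<in> carrier_vec N"
    and d: "0 < d" "d < N"
    and AinjA: "\<forall>v\<in>carrier_vec N. calQ N Q *\<^sub>v v = 0\<^sub>v N \<longrightarrow> v = 0\<^sub>v N"
    and inv: "invertible_mat (mat_delete (calQ N Q) d 0)"
begin

lemma dims: "i < N \<Longrightarrow> Q i \<in> carrier_mat N N \<and> b i \<in> carrier_vec N"
  using dimsA by blast

lemma Ainj: "v \<in> carrier_vec N \<Longrightarrow> calQ N Q *\<^sub>v v = 0\<^sub>v N \<Longrightarrow> v = 0\<^sub>v N"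
  using AinjA by blast

lemma L_A: "calQ N Q \<in> carrier_mat N N" unfolding calQ_def by simp

lemma L_Aij: "i < N \<Longrightarrow> j < N \<Longrightarrow> calQ N Q $$ (i,j) = Q i $$ (i,j)"
  unfolding calQ_def by simp

lemma L_B: "calB N b \<in> carrier_vec N" "i < N \<Longrightarrow> calB N b $ i = b i $ i"
  unfolding calB_def by auto

lemma L_M: "mat_delete (calQ N Q) d 0 \<in> carrier_mat (N-1) (N-1)"
  using mat_delete_carrier[OF L_A] .

lemma L_Mij: "r < N-1 \<Longrightarrow> j < N-1 \<Longrightarrow> mat_delete (calQ N Q) d 0 $$ (r,j) = calQ N Q $$ (insert_index d r, Suc j)"
  unfolding mat_delete_def insert_index_def using L_A by auto

lemma L_Minv: "minv (mat_delete (calQ N Q) d 0) \<in> carrier_mat (N-1) (N-1)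
   \<and> mat_delete (calQ N Q) d 0 * minv (mat_delete (calQ N Q) d 0) = 1\<^sub>m (N-1)
   \<and> minv (mat_delete (calQ N Q) d 0) * mat_delete (calQ N Q) d 0 = 1\<^sub>m (N-1)"
  using minv_spec2[OF L_M inv] .

lemma L_dims: "dim_row (mat_delete (calQ N Q) d 0) = N-1" "dim_col (mat_delete (calQ N Q) d 0) = N-1"
  "dim_row (minv (mat_delete (calQ N Q) d 0)) = N-1" "dim_col (minv (mat_delete (calQ N Q) d 0)) = N-1"
  "dim_row (del_row (calQ N Q) d) = N-1" "dim_col (del_row (calQ N Q) d) = N"
  "dim_row (calQ N Q) = N" "dim_col (calQ N Q) = N"
  using L_M L_Minv L_A unfolding del_row_def by auto

lemma L_ins: "r < N-1 \<Longrightarrow> insert_index d r < N"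
  unfolding insert_index_def by auto

lemma L_c: "col (del_row (calQ N Q) d) 0 \<in> carrier_vec (N-1)"
  "r < N-1 \<Longrightarrow> col (del_row (calQ N Q) d) 0 $ r = calQ N Q $$ (insert_index d r, 0)"
  unfolding del_row_def using L_A d by auto

lemma L_w: "- (minv (mat_delete (calQ N Q) d 0) *\<^sub>v col (del_row (calQ N Q) d) 0) \<in> carrier_vec (N-1)"
   "mat_delete (calQ N Q) d 0 *\<^sub>v (- (minv (mat_delete (calQ N Q) d 0) *\<^sub>v col (del_row (calQ N Q) d) 0))
     = - col (del_row (calQ N Q) d) 0"
proof -
  let ?M = "mat_delete (calQ N Q) d 0" and ?c = "col (del_row (calQ N Q) d) 0"
  show "- (minv ?M *\<^sub>v ?c) \<in> carrier_vec (N-1)" using L_Minv L_c by auto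
  have "?M *\<^sub>v (minv ?M *\<^sub>v ?c) = ?c"
    using assoc_mult_mat_vec[OF L_M conjunct1[OF L_Minv] L_c(1), symmetric] L_Minv L_c by simp
  then show "?M *\<^sub>v (- (minv ?M *\<^sub>v ?c)) = - ?c"
    using mv_uminus[OF L_M, of "minv ?M *\<^sub>v ?c"] L_Minv L_c by auto
qed


lemma L_Phi: "Phi N Q d \<in> carrier_vec N" "Phi N Q d $ 0 = 1"
  "j < N-1 \<Longrightarrow> Phi N Q d $ Suc j = (- (minv (mat_delete (calQ N Q) d 0) *\<^sub>v col (del_row (calQ N Q) d) 0)) $ j"
  unfolding Phi_def Let_def using d by auto

lemma L_rowsplit:
  assumes y: "y \<in> carrier_vec N" and r: "r < N-1"
  shows "row (calQ N Q) (insert_index d r) \<bullet> y =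
     col (del_row (calQ N Q) d) 0 $ r * y $ 0 + (mat_delete (calQ N Q) d 0 *\<^sub>v vec (N-1) (\<lambda>j. y $ Suc j)) $ r"
proof -
  let ?i = "insert_index d r"
  have i: "?i < N" using L_ins[OF r] .
  have N: "N = Suc (N-1)" using d by auto
  have "row (calQ N Q) ?i \<bullet> y = (\<Sum>j\<in>{0..<N}. calQ N Q $$ (?i,j) * y $ j)"
    unfolding scalar_prod_def using y i L_A by auto
  also have "\<dots> = calQ N Q $$ (?i,0) * y $ 0 + (\<Sum>j\<in>{0..<N-1}. calQ N Q $$ (?i,Suc j) * y $ Suc j)"
    by (subst N, subst sum.atLeast0_lessThan_Suc_shift) (simp add: o_def)
  also have "(\<Sum>j\<in>{0..<N-1}. calQ N Q $$ (?i,Suc j) * y $ Suc j) =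
      (mat_delete (calQ N Q) d 0 *\<^sub>v vec (N-1) (\<lambda>j. y $ Suc j)) $ r"
    using r L_dims by (auto simp: scalar_prod_def L_Mij intro!: sum.cong)
  finally show ?thesis using L_c(2)[OF r] by simp
qed

lemma L_rowPhi: assumes m: "m < N" "m \<noteq> d" shows "row (calQ N Q) m \<bullet> Phi N Q d = 0"
proof -
  define r where "r = delete_index d m"
  have r: "r < N-1" using m d unfolding r_def delete_index_def by auto
  have mr: "insert_index d r = m" unfolding r_def using insert_delete_index[OF m(2)] .
  have t: "vec (N-1) (\<lambda>j. Phi N Q d $ Suc j) = - (minv (mat_delete (calQ N Q) d 0) *\<^sub>v col (del_row (calQ N Q) d) 0)"
  proof (rule eq_vecI)
    fix i assume "i < dim_vec (- (minv (mat_delete (calQ N Q) d 0) *\<^sub>v col (del_row (calQ N Q) d) 0))"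
    hence i: "i < N-1" using L_w(1) L_dims by simp
    show "vec (N-1) (\<lambda>j. Phi N Q d $ Suc j) $ i = (- (minv (mat_delete (calQ N Q) d 0) *\<^sub>v col (del_row (calQ N Q) d) 0)) $ i"
      using L_Phi(3)[OF i] i by simp
  qed (use L_w(1) L_dims in simp)
  have "row (calQ N Q) m \<bullet> Phi N Q d = col (del_row (calQ N Q) d) 0 $ r + (- col (del_row (calQ N Q) d) 0) $ r"
    using L_rowsplit[OF L_Phi(1) r] unfolding mr t L_w(2) L_Phi(2) by simp
  also have "\<dots> = 0" using r L_c(1)[THEN carrier_vecD] by simp
  finally show ?thesis .
qed

lemma L_kernel: assumes y: "y \<in> carrier_vec N" and z: "\<And>m. m < N \<Longrightarrow> m \<noteq> d \<Longrightarrow> row (calQ N Q) m \<bullet> y = 0"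
  shows "y = y $ 0 \<cdot>\<^sub>v Phi N Q d"
proof -
  let ?M = "mat_delete (calQ N Q) d 0" and ?c = "col (del_row (calQ N Q) d) 0"
  define t where "t = vec (N-1) (\<lambda>j. y $ Suc j)"
  have tc: "t \<in> carrier_vec (N-1)" unfolding t_def by simp
  have Mt: "?M *\<^sub>v t = - (y $ 0 \<cdot>\<^sub>v ?c)"
  proof (rule eq_vecI)
    fix r assume "r < dim_vec (- (y $ 0 \<cdot>\<^sub>v ?c))"
    hence r: "r < N-1" using L_c(1) L_dims by simp
    have "row (calQ N Q) (insert_index d r) \<bullet> y = 0" using z L_ins[OF r] by simp
    then show "(?M *\<^sub>v t) $ r = (- (y $ 0 \<cdot>\<^sub>v ?c)) $ r"
      using L_rowsplit[OF y r] r L_c(1)[THEN carrier_vecD] unfolding t_def by (simp add: algebra_simps)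
  qed (use L_M L_c L_dims in auto)
  have "t = (minv ?M * ?M) *\<^sub>v t" using L_Minv tc by simp
  also have "\<dots> = minv ?M *\<^sub>v (?M *\<^sub>v t)" using assoc_mult_mat_vec[OF conjunct1[OF L_Minv] L_M tc] .
  also have "\<dots> = minv ?M *\<^sub>v (- (y $ 0 \<cdot>\<^sub>v ?c))" using Mt by simp
  also have "\<dots> = y $ 0 \<cdot>\<^sub>v (- (minv ?M *\<^sub>v ?c))"
    using mv_uminus[of "minv ?M" "N-1" "N-1" "y $ 0 \<cdot>\<^sub>v ?c"] mult_mat_vec[of "minv ?M" "N-1" "N-1" ?c "y$0"]
      L_Minv L_c(1) by auto
  finally have tw: "t = y $ 0 \<cdot>\<^sub>v (- (minv ?M *\<^sub>v ?c))" .
  show ?thesis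
  proof (rule eq_vecI)
    fix i assume "i < dim_vec (y $ 0 \<cdot>\<^sub>v Phi N Q d)"
    hence i: "i < N" using L_Phi by simp
    show "y $ i = (y $ 0 \<cdot>\<^sub>v Phi N Q d) $ i"
    proof (cases i)
      case 0 then show ?thesis using i L_Phi by simp
    next
      case (Suc j)
      hence j: "j < N-1" using i by simp
      have "y $ i = t $ j" unfolding t_def using j Suc by simp
      also have "\<dots> = y $ 0 * (- (minv ?M *\<^sub>v ?c)) $ j" using tw j L_w(1)[THEN carrier_vecD] by simp
      finally show ?thesis using Suc j L_Phi i by simp
    qed
  qed (use y L_Phi in auto)
qed

lemma L_Qd: "Qdelta N Q d \<delta> \<in> carrier_mat N N"
  unfolding Qdelta_def calQ_def barQ_def by auto

lemma L_Qdrow: assumes m: "m < N" and y: "y \<in> carrier_vec N"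
  shows "row (Qdelta N Q d \<delta>) m \<bullet> y = row (calQ N Q) m \<bullet> y + (if m = d then \<delta> * (row (Q d) 0 \<bullet> y) else 0)"
proof -
  have Qd: "Q d \<in> carrier_mat N N" using dims d by auto
  have "row (Qdelta N Q d \<delta>) m \<bullet> y = (\<Sum>j\<in>{0..<N}. (calQ N Q $$ (m,j) + (if m = d then \<delta> * Q d $$ (0,j) else 0)) * y $ j)"
    unfolding scalar_prod_def Qdelta_def barQ_def using m y by (auto simp: calQ_def intro!: sum.cong)
  also have "\<dots> = (\<Sum>j\<in>{0..<N}. calQ N Q $$ (m,j) * y $ j) + (if m = d then \<delta> * (\<Sum>j\<in>{0..<N}. Q d $$ (0,j) * y $ j) else 0)"
    by (auto simp: algebra_simps sum.distrib sum_distrib_left)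
  also have "\<dots> = row (calQ N Q) m \<bullet> y + (if m = d then \<delta> * (row (Q d) 0 \<bullet> y) else 0)"
    unfolding scalar_prod_def using m y Qd d L_A by auto
  finally show ?thesis .
qed

lemma L_rowAd: assumes y: "y \<in> carrier_vec N"
  shows "row (calQ N Q) d \<bullet> y = row (Q d) d \<bullet> y"
proof -
  have Qd: "Q d \<in> carrier_mat N N" using dims d by auto
  show ?thesis unfolding scalar_prod_def using y Qd d L_A by (auto simp: L_Aij)
qed

lemma L_Bd: "Bdelta N b d \<delta> \<in> carrier_vec N"
  "m < N \<Longrightarrow> Bdelta N b d \<delta> $ m = b m $ m + (if m = d then \<delta> * b d $ 0 else 0)"
  unfolding Bdelta_def calB_def barB_def by auto

lemma L_xs: "xstar N Q b \<in> carrier_vec N" "m < N \<Longrightarrow> row (calQ N Q) m \<bullet> xstar N Q b = - (b m $ m)"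
proof -
  have sp: "minv (calQ N Q) \<in> carrier_mat N N \<and> calQ N Q * minv (calQ N Q) = 1\<^sub>m N"
    using minv_spec[OF L_A Ainj] by auto
  show xc: "xstar N Q b \<in> carrier_vec N" unfolding xstar_def using sp L_B by auto
  have "calQ N Q *\<^sub>v xstar N Q b = - (calQ N Q *\<^sub>v (minv (calQ N Q) *\<^sub>v calB N b))"
    unfolding xstar_def using mv_uminus[OF L_A, of "minv (calQ N Q) *\<^sub>v calB N b"] sp L_B by auto
  also have "calQ N Q *\<^sub>v (minv (calQ N Q) *\<^sub>v calB N b) = calB N b"
    using assoc_mult_mat_vec[OF L_A conjunct1[OF sp] L_B(1), symmetric] sp L_B by simp
  finally have e: "calQ N Q *\<^sub>v xstar N Q b = - calB N b" .
  assume m: "m < N"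
  have "(calQ N Q *\<^sub>v xstar N Q b) $ m = row (calQ N Q) m \<bullet> xstar N Q b" using m L_dims by simp
  thus "row (calQ N Q) m \<bullet> xstar N Q b = - (b m $ m)" using e m L_B by simp
qed


lemma L_rowc: "m < N \<Longrightarrow> row (calQ N Q) m \<in> carrier_vec N" "row (Q d) 0 \<in> carrier_vec N"
  "row (Q d) d \<in> carrier_vec N"
proof -
  have "Q d \<in> carrier_mat N N" using dims d by auto
  then show "row (Q d) 0 \<in> carrier_vec N" "row (Q d) d \<in> carrier_vec N" by auto
qed (use L_A in auto)

lemma L_QdD: "dim_row (Qdelta N Q d \<delta>) = N" "dim_col (Qdelta N Q d \<delta>) = N" "dim_vec (Bdelta N b d \<delta>) = N"
  using L_Qd L_Bd(1) by auto

lemma L_sol: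
  assumes s: "q2 N Q d * \<delta> + q3 N Q d \<noteq> 0"
  shows "Qdelta N Q d \<delta> *\<^sub>v (xstar N Q b + fdec N Q b d \<delta> \<cdot>\<^sub>v Phi N Q d) = - Bdelta N b d \<delta>"
proof (rule eq_vecI)
  let ?e = "fdec N Q b d \<delta>" and ?x = "xstar N Q b + fdec N Q b d \<delta> \<cdot>\<^sub>v Phi N Q d"
  have xc: "?x \<in> carrier_vec N" using L_xs L_Phi by auto
  fix m assume "m < dim_vec (- Bdelta N b d \<delta>)"
  hence m: "m < N" using L_QdD by simp
  have ra: "row (calQ N Q) m \<bullet> ?x = - (b m $ m) + ?e * (row (calQ N Q) m \<bullet> Phi N Q d)"
    using scalar_prod_add_distrib[OF L_rowc(1)[OF m] L_xs(1), of "?e \<cdot>\<^sub>v Phi N Q d"] L_Phi L_xs(2)[OF m] L_rowc(1)[OF m]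
    by auto
  have lhs: "(Qdelta N Q d \<delta> *\<^sub>v ?x) $ m = row (Qdelta N Q d \<delta>) m \<bullet> ?x"
    using m L_QdD by auto
  have bm: "(- Bdelta N b d \<delta>) $ m = - (Bdelta N b d \<delta> $ m)"
    using m L_QdD(3)[of \<delta>] by (simp del: L_QdD)
  show "(Qdelta N Q d \<delta> *\<^sub>v ?x) $ m = (- Bdelta N b d \<delta>) $ m"
  proof (cases "m = d")
    case False
    then show ?thesis using lhs L_Qdrow[OF m xc] ra L_rowPhi[OF m False] L_Bd m L_QdD bm by simp
  next
    case True
    have r0: "row (Q d) 0 \<bullet> ?x = row (Q d) 0 \<bullet> xstar N Q b + ?e * q2 N Q d"
      using scalar_prod_add_distrib[OF L_rowc(2) L_xs(1), of "?e \<cdot>\<^sub>v Phi N Q d"] L_Phi L_rowc(2)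
      unfolding q2_def by auto
    have q3: "row (calQ N Q) m \<bullet> Phi N Q d = q3 N Q d" unfolding q3_def True using L_rowAd[OF L_Phi(1)] .
    have "?e * (q2 N Q d * \<delta> + q3 N Q d) = - \<delta> * (b d $ 0 + row (Q d) 0 \<bullet> xstar N Q b)"
      unfolding fdec_def q1_def using s by (simp add: field_simps)
    then show ?thesis using lhs L_Qdrow[OF m xc] ra r0 q3 L_Bd m True L_QdD bm
      by (simp add: algebra_simps)
  qed
qed (use L_QdD in simp)

lemma L_inj:
  assumes s: "q2 N Q d * \<delta> + q3 N Q d \<noteq> 0" and y: "y \<in> carrier_vec N"
    and z: "Qdelta N Q d \<delta> *\<^sub>v y = 0\<^sub>v N"
  shows "y = 0\<^sub>v N"
proof -
  have rz: "row (Qdelta N Q d \<delta>) m \<bullet> y = 0" if "m < N" for m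
  proof -
    have "(Qdelta N Q d \<delta> *\<^sub>v y) $ m = 0" using z that by simp
    thus ?thesis using that L_QdD by auto
  qed
  have yk: "y = y $ 0 \<cdot>\<^sub>v Phi N Q d"
    using L_kernel[OF y] rz L_Qdrow[OF _ y] by (metis add.right_neutral)
  have "0 = row (Qdelta N Q d \<delta>) d \<bullet> y" using rz d by simp
  also have "\<dots> = row (Q d) d \<bullet> y + \<delta> * (row (Q d) 0 \<bullet> y)"
    using L_Qdrow[OF d(2) y] L_rowAd[OF y] by simp
  also have "\<dots> = y $ 0 * (q2 N Q d * \<delta> + q3 N Q d)"
    unfolding q2_def q3_def using L_rowc(2,3) L_Phi(1)
    by (subst (1 2) yk) (simp add: algebra_simps)
  finally have "y $ 0 = 0" using s by simp
  with yk show ?thesis using L_Phi(1) by (auto intro!: eq_vecI)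
qed

lemma L_xdelta:
  assumes s: "q2 N Q d * \<delta> + q3 N Q d \<noteq> 0"
  shows "xdelta N Q b d \<delta> = xstar N Q b + fdec N Q b d \<delta> \<cdot>\<^sub>v Phi N Q d"
proof -
  let ?x = "xstar N Q b + fdec N Q b d \<delta> \<cdot>\<^sub>v Phi N Q d" and ?R = "Qdelta N Q d \<delta>"
  have xc: "?x \<in> carrier_vec N" using L_xs L_Phi by auto
  have sp: "minv ?R \<in> carrier_mat N N \<and> minv ?R * ?R = 1\<^sub>m N"
    using minv_spec[OF L_Qd L_inj[OF s]] by auto
  have "?x = (minv ?R * ?R) *\<^sub>v ?x" using sp xc by simp
  also have "\<dots> = minv ?R *\<^sub>v (?R *\<^sub>v ?x)" using assoc_mult_mat_vec[OF conjunct1[OF sp] L_Qd xc] .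
  also have "\<dots> = minv ?R *\<^sub>v (- Bdelta N b d \<delta>)" using L_sol[OF s] by simp
  also have "\<dots> = xdelta N Q b d \<delta>" unfolding xdelta_def using mv_uminus sp L_Bd(1) by blast
  finally show ?thesis by simp
qed

lemma L_Delta1:
  assumes "\<delta> \<in> Delta1 N Q d k"
  shows "q2 N Q d * \<delta> + q3 N Q d \<noteq> 0"
proof
  assume s: "q2 N Q d * \<delta> + q3 N Q d = 0"
  have h: "hurwitz (- (k \<cdot>\<^sub>m Qdelta N Q d \<delta>))" using assms unfolding Delta1_def by simp
  have "Qdelta N Q d \<delta> *\<^sub>v Phi N Q d = 0\<^sub>v N"
  proof (rule eq_vecI)
    fix m assume "m < dim_vec (0\<^sub>v N :: real vec)"
    hence m: "m < N" by simp
    have "(Qdelta N Q d \<delta> *\<^sub>v Phi N Q d) $ m = row (Qdelta N Q d \<delta>) m \<bullet> Phi N Q d" using m L_QdD by auto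
    also have "\<dots> = 0"
    proof (cases "m = d")
      case True
      have "row (Qdelta N Q d \<delta>) m \<bullet> Phi N Q d = q3 N Q d + \<delta> * q2 N Q d"
        using L_Qdrow[OF m L_Phi(1)] L_rowAd[OF L_Phi(1)] True unfolding q2_def q3_def by simp
      then show ?thesis using s by (simp add: algebra_simps)
    qed (use L_Qdrow[OF m L_Phi(1)] L_rowPhi[OF m] in simp)
    finally show "(Qdelta N Q d \<delta> *\<^sub>v Phi N Q d) $ m = 0\<^sub>v N $ m" using m by simp
  qed (use L_Qd in auto)
  from hurwitz_inj[OF h L_Qd L_Phi(1) this] have "Phi N Q d = 0\<^sub>v N" .
  hence "Phi N Q d $ 0 = 0" using d by simp
  with L_Phi(2) show False by simp
qed

end

lemma L_Jc:
  fixes Q0 :: "real mat"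
  assumes Q0: "Q0 \<in> carrier_mat N N" and s: "transpose_mat Q0 = Q0" and b0: "b0 \<in> carrier_vec N"
    and X: "X \<in> carrier_vec N" and P: "P \<in> carrier_vec N"
  shows "Jc Q0 b0 c (X + e \<cdot>\<^sub>v P) = (1/2 * (P \<bullet> (Q0 *\<^sub>v P))) * e^2 + ((Q0 *\<^sub>v X + b0) \<bullet> P) * e + Jc Q0 b0 c X"
proof -
  have QX: "Q0 *\<^sub>v X \<in> carrier_vec N" and QP: "Q0 *\<^sub>v P \<in> carrier_vec N" using Q0 X P by auto
  have m: "Q0 *\<^sub>v (X + e \<cdot>\<^sub>v P) = Q0 *\<^sub>v X + e \<cdot>\<^sub>v (Q0 *\<^sub>v P)"
    using mult_add_distrib_mat_vec[OF Q0 X, of "e \<cdot>\<^sub>v P"] mult_mat_vec[OF Q0 P] P by auto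
  have sym1: "X \<bullet> (Q0 *\<^sub>v P) = (Q0 *\<^sub>v X) \<bullet> P"
    using transpose_vec_mult_scalar[OF Q0 P X] s by simp
  have sym2: "P \<bullet> (Q0 *\<^sub>v X) = (Q0 *\<^sub>v X) \<bullet> P" using comm_scalar_prod[OF P QX] .
  have "(X + e \<cdot>\<^sub>v P) \<bullet> (Q0 *\<^sub>v (X + e \<cdot>\<^sub>v P))
      = X \<bullet> (Q0 *\<^sub>v X) + e * (X \<bullet> (Q0 *\<^sub>v P)) + e * (P \<bullet> (Q0 *\<^sub>v X)) + e * e * (P \<bullet> (Q0 *\<^sub>v P))"
    unfolding m using X P QX QP
    by (simp add: add_scalar_prod_distrib[of _ N] scalar_prod_add_distrib[of _ N] algebra_simps)
  moreover have "b0 \<bullet> (X + e \<cdot>\<^sub>v P) = b0 \<bullet> X + e * (b0 \<bullet> P)"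
    using b0 X P by (simp add: scalar_prod_add_distrib[of _ N])
  moreover have "(Q0 *\<^sub>v X + b0) \<bullet> P = (Q0 *\<^sub>v X) \<bullet> P + b0 \<bullet> P"
    using QX b0 P by (simp add: add_scalar_prod_distrib[of _ N])
  ultimately show ?thesis unfolding Jc_def sym1 sym2 by (simp add: algebra_simps power2_eq_square)
qed

lemma sign_lemma:
  fixes P a e c1 :: real assumes "a \<noteq> 0"
  shows "P * (2 * a * e + c1) = 2 * (P * a) * (e - (- c1 / (2 * a)))"
  using assms by (simp add: field_simps)
lemma derf: fixes q1 q2 q3 \<delta> :: real assumes s: "q2 * \<delta> + q3 \<noteq> 0"
  shows "((\<lambda>x. q1 * x / (q2 * x + q3)) has_real_derivative q1 * q3 / (q2 * \<delta> + q3)^2) (at \<delta>)"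
proof -
  have "((\<lambda>x. q1 * x / (q2 * x + q3)) has_real_derivative (q1 * (q2 * \<delta> + q3) - q1 * \<delta> * q2) / (q2 * \<delta> + q3)^2) (at \<delta>)"
    using s by (auto intro!: derivative_eq_intros simp: power2_eq_square)
  moreover have "(q1 * (q2 * \<delta> + q3) - q1 * \<delta> * q2) = q1 * q3" by (simp add: algebra_simps)
  ultimately show ?thesis by simp
qed
lemma derg: fixes a c C e :: real shows "((\<lambda>e. a * e^2 + c * e + C) has_real_derivative 2 * a * e + c) (at e)"
  by (auto intro!: derivative_eq_intros)
lemma sgnP: fixes P e e0 :: real shows "P > 0 \<Longrightarrow> P * (e - e0) < 0 \<longleftrightarrow> e < e0" "P < 0 \<Longrightarrow> P * (e - e0) < 0 \<longleftrightarrow> e > e0"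
  by (auto simp: mult_less_0_iff)
lemma sgn_gen: fixes eps a c q1 q3 e S :: real assumes a: "a \<noteq> 0" and S: "S \<noteq> 0"
  shows "eps * ((2 * a * e + c) * (q1 * q3 / S^2)) < 0 \<longleftrightarrow> (eps * a * q1 * q3) * (e - (- c / (2 * a))) < 0"
proof -
  have pos: "S^2 > 0" using S by simp
  have e1: "eps * ((2 * a * e + c) * (q1 * q3 / S^2)) = (eps * q1 * q3 * (2 * a * e + c)) / S^2" by simp
  have e2: "eps * q1 * q3 * (2 * a * e + c) = 2 * ((eps * a * q1 * q3) * (e - (- c / (2 * a))))"
    using a by (simp add: field_simps)
  show ?thesis unfolding e1 e2 using pos by (simp add: divide_less_0_iff mult_less_0_iff)
qed
lemma img_lemma: "{J. \<exists>\<delta>\<in>D. g (f \<delta>) = J \<and> R (f \<delta>)} = g ` ({e. R e} \<inter> f ` D)" by auto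

theorem theorem2:
  fixes N d :: nat and Q :: "nat \<Rightarrow> real mat" and b :: "nat \<Rightarrow> real vec" and p :: "nat \<Rightarrow> real"
    and k eps1 :: real and \<Omega> :: "real set"
  assumes dims: "\<And>i. i < N \<Longrightarrow> Q i \<in> carrier_mat N N \<and> b i \<in> carrier_vec N"
    and sym: "\<And>i. i < N \<Longrightarrow> transpose_mat (Q i) = Q i"
    and d: "0 < d" "d < N"
    and k: "k > 0"
    and hur: "hurwitz (- (k \<cdot>\<^sub>m calQ N Q))"
    and inv: "invertible_mat (mat_delete (calQ N Q) d 0)"
    and eps: "eps1 \<noteq> 0"
    and Omega: "\<Omega> = {Jref. attainable N Q b p d k eps1 Jref}"
    and r12: "r2 N Q d 0 \<noteq> 0"
  shows "(eps1 * r2 N Q d 0 * q1 N Q b d * q3 N Q d > 0 \<longrightarrow>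
            \<Omega> = calJ N Q b p d 0 ` ({..< - r1 N Q b d 0 / (2 * r2 N Q d 0)} \<inter> fdec N Q b d ` Delta1 N Q d k))
       \<and> (eps1 * r2 N Q d 0 * q1 N Q b d * q3 N Q d < 0 \<longrightarrow>
            \<Omega> = calJ N Q b p d 0 ` ({- r1 N Q b d 0 / (2 * r2 N Q d 0) <..} \<inter> fdec N Q b d ` Delta1 N Q d k))"
proof -
  have AC: "calQ N Q \<in> carrier_mat N N" unfolding calQ_def by simp
  have Ainj: "\<And>v. v \<in> carrier_vec N \<Longrightarrow> calQ N Q *\<^sub>v v = 0\<^sub>v N \<Longrightarrow> v = 0\<^sub>v N"
    using hurwitz_inj[OF hur AC] by blast
  have dimsA: "\<forall>i<N. Q i \<in> carrier_mat N N \<and> b i \<in> carrier_vec N" using dims by blast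
  have AinjA: "\<forall>v\<in>carrier_vec N. calQ N Q *\<^sub>v v = 0\<^sub>v N \<longrightarrow> v = 0\<^sub>v N" using Ainj by blast
  note ctx = dimsA d AinjA inv
  let ?J0 = "\<lambda>\<delta>. Jc (Q 0) (b 0) (p 0) (xdelta N Q b d \<delta>)"
  let ?g = "calJ N Q b p d 0" and ?f = "fdec N Q b d"
  let ?s = "\<lambda>\<delta>. q2 N Q d * \<delta> + q3 N Q d"
  let ?a = "r2 N Q d 0" and ?c = "r1 N Q b d 0" and ?q1 = "q1 N Q b d" and ?q3 = "q3 N Q d"
  let ?D = "\<lambda>\<delta>. (2 * ?a * ?f \<delta> + ?c) * (?q1 * ?q3 / (?s \<delta>)^2)"
  have Q0: "Q 0 \<in> carrier_mat N N" "b 0 \<in> carrier_vec N" "transpose_mat (Q 0) = Q 0"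
    using dims sym d by auto
  have eqU: "?J0 \<delta> = ?g (?f \<delta>)" if "?s \<delta> \<noteq> 0" for \<delta>
  proof -
    have "?J0 \<delta> = Jc (Q 0) (b 0) (p 0) (xstar N Q b + ?f \<delta> \<cdot>\<^sub>v Phi N Q d)"
      by (subst L_xdelta[OF ctx that]) (rule refl)
    also have "\<dots> = ?g (?f \<delta>)"
      by (subst L_Jc[OF Q0(1,3,2) L_xs(1)[OF ctx] L_Phi(1)[OF ctx]]) (simp add: calJ_def r2_def r1_def)
    finally show ?thesis .
  qed
  have derf: "(?f has_real_derivative ?q1 * ?q3 / (?s \<delta>)^2) (at \<delta>)" if s: "?s \<delta> \<noteq> 0" for \<delta>
  proof -
    have "?f = (\<lambda>x. ?q1 * x / (q2 N Q d * x + ?q3))" by (rule ext) (simp add: fdec_def)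
    then show ?thesis using derf[OF s, of ?q1] by simp
  qed
  have gdef: "?g = (\<lambda>e. ?a * e^2 + ?c * e + Jc (Q 0) (b 0) (p 0) (xstar N Q b))"
    by (rule ext) (simp add: calJ_def)
  have derg: "(?g has_real_derivative 2 * ?a * e + ?c) (at e)" for e
    unfolding gdef by (rule derg)
  have derG: "((\<lambda>x. ?g (?f x)) has_real_derivative ?D \<delta>) (at \<delta>)" if s: "?s \<delta> \<noteq> 0" for \<delta>
    using DERIV_chain2[OF derg derf[OF s]] by simp
  have opn: "open {x. ?s x \<noteq> 0}"
    by (rule open_Collect_neq) (intro continuous_intros)+
  have derJ: "(?J0 has_real_derivative ?D \<delta>) (at \<delta>)" if s: "?s \<delta> \<noteq> 0" for \<delta>
    by (rule has_field_derivative_transform_within_open[OF derG[OF s] opn]) (use s eqU in auto)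
  have att: "attainable N Q b p d k eps1 J \<longleftrightarrow> (\<exists>\<delta>\<in>Delta1 N Q d k. ?g (?f \<delta>) = J \<and> eps1 * ?D \<delta> < 0)" for J
  proof
    assume "attainable N Q b p d k eps1 J"
    then obtain \<delta> D where \<delta>: "\<delta> \<in> Delta1 N Q d k" "?J0 \<delta> = J" and D: "(?J0 has_real_derivative D) (at \<delta>)" "eps1 * D < 0"
      unfolding attainable_def by blast
    have s: "?s \<delta> \<noteq> 0" using L_Delta1[OF ctx \<delta>(1)] .
    have "D = ?D \<delta>" using DERIV_unique[OF D(1) derJ[OF s]] .
    then show "\<exists>\<delta>\<in>Delta1 N Q d k. ?g (?f \<delta>) = J \<and> eps1 * ?D \<delta> < 0" using \<delta> D eqU[OF s] by auto
  next
    assume "\<exists>\<delta>\<in>Delta1 N Q d k. ?g (?f \<delta>) = J \<and> eps1 * ?D \<delta> < 0"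
    then obtain \<delta> where \<delta>: "\<delta> \<in> Delta1 N Q d k" "?g (?f \<delta>) = J" "eps1 * ?D \<delta> < 0" by blast
    have s: "?s \<delta> \<noteq> 0" using L_Delta1[OF ctx \<delta>(1)] .
    show "attainable N Q b p d k eps1 J" unfolding attainable_def
    proof (intro bexI conjI exI)
      show "?J0 \<delta> = J" using \<delta>(2) eqU[OF s] by simp
      show "(?J0 has_real_derivative ?D \<delta>) (at \<delta>)" using derJ[OF s] .
      show "eps1 * ?D \<delta> < 0" using \<delta>(3) .
    qed (use \<delta>(1) in simp)
  qed
  have sgn: "eps1 * ?D \<delta> < 0 \<longleftrightarrow> (eps1 * ?a * ?q1 * ?q3) * (?f \<delta> - (- ?c / (2 * ?a))) < 0"
    if s: "?s \<delta> \<noteq> 0" for \<delta>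
    using sgn_gen[OF r12 s, of eps1 "?f \<delta>" ?c ?q1 ?q3] .
  have OmD: "\<Omega> = {J. \<exists>\<delta>\<in>Delta1 N Q d k. ?g (?f \<delta>) = J \<and> (eps1 * ?a * ?q1 * ?q3) * (?f \<delta> - (- ?c / (2 * ?a))) < 0}"
    unfolding Omega att
  proof (intro Collect_cong bex_cong refl)
    fix J \<delta> assume "\<delta> \<in> Delta1 N Q d k"
    from sgn[OF L_Delta1[OF ctx this]]
    show "(?g (?f \<delta>) = J \<and> eps1 * ?D \<delta> < 0) = (?g (?f \<delta>) = J \<and> (eps1 * ?a * ?q1 * ?q3) * (?f \<delta> - (- ?c / (2 * ?a))) < 0)"
      by simp
  qed
  note OmI = OmD[unfolded img_lemma[where R = "\<lambda>e. (eps1 * ?a * ?q1 * ?q3) * (e - (- ?c / (2 * ?a))) < 0"]]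
  show ?thesis
  proof (intro conjI impI)
    assume P: "eps1 * ?a * ?q1 * ?q3 > 0"
    have "{e. (eps1 * ?a * ?q1 * ?q3) * (e - (- ?c / (2 * ?a))) < 0} = {..< - ?c / (2 * ?a)}"
      using sgnP(1)[OF P] by blast
    then show "\<Omega> = ?g ` ({..< - ?c / (2 * ?a)} \<inter> ?f ` Delta1 N Q d k)"
      using OmI by simp
  next
    assume P: "eps1 * ?a * ?q1 * ?q3 < 0"
    have "{e. (eps1 * ?a * ?q1 * ?q3) * (e - (- ?c / (2 * ?a))) < 0} = {- ?c / (2 * ?a) <..}"
      using sgnP(2)[OF P] by blast
    then show "\<Omega> = ?g ` ({- ?c / (2 * ?a) <..} \<inter> ?f ` Delta1 N Q d k)"
      using OmI by simp
  qed
qed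

end
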